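(* There is a constant $C$, depending only on $h$ and $b_1,\dots,b_h$, with the following property. Let $A\subseteq\mathbb{Z}_{\ge0}$, $0<\delta<1$, $2\le\ell\le h$ and $n\ge0$. Let $\mathrm{R}$ be any one of $r,\ r^*,\ \rho,\ \rho^{(\delta\text{-small})}$. Then \[ \mathrm{R}_{A,\ell}(n)\le C\,\widehat{\mathrm{R}}_{A,\ell}(n)\prod_{j=2}^{\ell-1}\Big(\max_{0\le k\le n}\widehat{r}^{\,*}_{A,j}(k)\Big), \] where the empty product (for $\ell=2$) equals $1$.
   Context: Fix an integer $h\ge 2$ and positive integers $b_1,\dots,b_h$, not necessarily distinct, with $\gcd(b_1,\dots,b_h)=1$. Let $A\subseteq\mathbb{Z}_{\ge0}$, $1\le\ell\le h$ and $n\ge0$ be an integer. Representation functions: - $r_{A,\ell}(n)$ counts the tuples $(k_1,\dots,k_\ell)\in A^\ell$ with $b_1k_1+\cdots+b_\ell k_\ell=n$. - $\rho_{A,\ell}(n)$ counts those tuples in which the $k_i$ are pairwise distinct ("exact" solutions). - For $0<\delta<1$, $\rho^{(\delta\text{-small})}_{A,\ell}(n)$ counts exact solutions with $k_j<n^\delta$ for some $j$. - $r^*_{A,\ell}(n)$ is the maximum, over index choices $1\le i_1<\cdots<i_\ell\le h$, of the number of $(k_1,\dots,k_\ell)\in A^\ell$ with $b_{i_1}k_1+\cdots+b_{i_\ell}k_\ell=n$. Disjoint families: the support of a solution tuple is the set $\{k_1,\dots,k_\ell\}$. A family of solutions is disjoint if their supports are pairwise disjoint. For each of the counting functions $\mathrm{R}$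 above, $\widehat{\mathrm{R}}_{A,\ell}(n)$ denotes the maximum cardinality of a disjoint family of solutions among those counted by $\mathrm{R}_{A,\ell}(n)$. For the starred function, $\widehat{r}^{\,*}_{A,\ell}(n)$ is the maximum over index choices $i_1<\cdots<i_\ell$ of the maximum cardinality of a disjoint family of solutions in $A^\ell$ of $b_{i_1}k_1+\cdots+b_{i_\ell}k_\ell=n$. *)

theory Defs
  imports Complex_Main
begin

text \<open>The coefficients b_1,...,b_h are given by a function b :: nat => nat on indices 1..h.\<close>

definition sols :: "nat set \<Rightarrow> nat list \<Rightarrow> nat \<Rightarrow> nat list set" where
  "sols A c n = {ks. length ks = length c \<and> set ks \<subseteq> A \<and>
                     (\<Sum>i<length c. c ! i * ks ! i) = n}"

definition disjoint_family_sols :: "nat list set \<Rightarrow> bool" where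
  "disjoint_family_sols F \<longleftrightarrow> (\<forall>x\<in>F. \<forall>y\<in>F. x \<noteq> y \<longrightarrow> set x \<inter> set y = {})"

definition hatc :: "nat list set \<Rightarrow> nat" where
  "hatc S = Max {card F | F. F \<subseteq> S \<and> finite F \<and> disjoint_family_sols F}"

definition bvec :: "(nat \<Rightarrow> nat) \<Rightarrow> nat \<Rightarrow> nat list" where
  "bvec b l = map b [1..<l+1]"

definition index_choices :: "nat \<Rightarrow> nat \<Rightarrow> nat list set" where
  "index_choices h l = {is. sorted_wrt (<) is \<and> length is = l \<and> set is \<subseteq> {1..h}}"

definition r_sols :: "(nat \<Rightarrow> nat) \<Rightarrow> nat set \<Rightarrow> nat \<Rightarrow> nat \<Rightarrow> nat list set" where
  "r_sols b A l n = sols A (bvec b l) n"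

definition rho_sols :: "(nat \<Rightarrow> nat) \<Rightarrow> nat set \<Rightarrow> nat \<Rightarrow> nat \<Rightarrow> nat list set" where
  "rho_sols b A l n = {ks \<in> sols A (bvec b l) n. distinct ks}"

definition rho_small_sols :: "(nat \<Rightarrow> nat) \<Rightarrow> real \<Rightarrow> nat set \<Rightarrow> nat \<Rightarrow> nat \<Rightarrow> nat list set" where
  "rho_small_sols b \<delta> A l n =
     {ks \<in> sols A (bvec b l) n. distinct ks \<and> (\<exists>j<l. real (ks ! j) < real n powr \<delta>)}"

definition r_fn :: "(nat \<Rightarrow> nat) \<Rightarrow> nat set \<Rightarrow> nat \<Rightarrow> nat \<Rightarrow> nat" where
  "r_fn b A l n = card (r_sols b A l n)"

definition rho_fn :: "(nat \<Rightarrow> nat) \<Rightarrow> nat set \<Rightarrow> nat \<Rightarrow> nat \<Rightarrow> nat" where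
  "rho_fn b A l n = card (rho_sols b A l n)"

definition rho_small_fn :: "(nat \<Rightarrow> nat) \<Rightarrow> real \<Rightarrow> nat set \<Rightarrow> nat \<Rightarrow> nat \<Rightarrow> nat" where
  "rho_small_fn b \<delta> A l n = card (rho_small_sols b \<delta> A l n)"

definition r_star_fn :: "nat \<Rightarrow> (nat \<Rightarrow> nat) \<Rightarrow> nat set \<Rightarrow> nat \<Rightarrow> nat \<Rightarrow> nat" where
  "r_star_fn h b A l n = Max ((\<lambda>is. card (sols A (map b is) n)) ` index_choices h l)"

definition hat_r_fn :: "(nat \<Rightarrow> nat) \<Rightarrow> nat set \<Rightarrow> nat \<Rightarrow> nat \<Rightarrow> nat" where
  "hat_r_fn b A l n = hatc (r_sols b A l n)"

definition hat_rho_fn :: "(nat \<Rightarrow> nat) \<Rightarrow> nat set \<Rightarrow> nat \<Rightarrow> nat \<Rightarrow> nat" where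
  "hat_rho_fn b A l n = hatc (rho_sols b A l n)"

definition hat_rho_small_fn :: "(nat \<Rightarrow> nat) \<Rightarrow> real \<Rightarrow> nat set \<Rightarrow> nat \<Rightarrow> nat \<Rightarrow> nat" where
  "hat_rho_small_fn b \<delta> A l n = hatc (rho_small_sols b \<delta> A l n)"

definition hat_r_star_fn :: "nat \<Rightarrow> (nat \<Rightarrow> nat) \<Rightarrow> nat set \<Rightarrow> nat \<Rightarrow> nat \<Rightarrow> nat" where
  "hat_r_star_fn h b A l n = Max ((\<lambda>is. hatc (sols A (map b is) n)) ` index_choices h l)"

definition prod_factor :: "nat \<Rightarrow> (nat \<Rightarrow> nat) \<Rightarrow> nat set \<Rightarrow> nat \<Rightarrow> nat \<Rightarrow> real" where
  "prod_factor h b A l n = (\<Prod>j\<in>{2..<l}. real (Max ((\<lambda>k. hat_r_star_fn h b A j k) ` {0..n})))"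

end

theory Submission
  imports Defs
begin

definition del :: "nat \<Rightarrow> 'a list \<Rightarrow> 'a list" where
  "del i xs = take i xs @ drop (Suc i) xs"

lemma length_del: "i < length xs \<Longrightarrow> length (del i xs) = length xs - 1"
  by (simp add: del_def)

lemma set_del: "set (del i xs) \<subseteq> set xs"
  by (auto simp: del_def dest: in_set_takeD in_set_dropD)

lemma map_del: "map f (del i xs) = del i (map f xs)"
  by (simp add: del_def take_map drop_map)

lemma del_inj:
  assumes "i < length xs" "length xs = length ys" "xs ! i = ys ! i" "del i xs = del i ys"
  shows "xs = ys"
proof -
  have "take i xs = take i ys" "drop (Suc i) xs = drop (Suc i) ys"
    using assms by (simp_all add: del_def append_eq_append_conv)
  moreover have "xs = take i xs @ xs!i # drop (Suc i) xs" by (rule id_take_nth_drop) (use assms in simp)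
  moreover have "ys = take i ys @ ys!i # drop (Suc i) ys" by (rule id_take_nth_drop) (use assms in simp)
  ultimately show ?thesis using assms(3) by simp
qed

lemma sum_eq_list:
  assumes "length ks = length c"
  shows "(\<Sum>i<length c. c ! i * ks ! i) = sum_list (map (\<lambda>(a,b). a*b) (zip c ks))"
  using assms by (simp add: sum_list_sum_nth lessThan_atLeast0)

lemma split_sum:
  fixes g :: "nat \<times> nat \<Rightarrow> nat" and c ks :: "nat list"
  assumes "i < length c" "length ks = length c"
  shows "sum_list (map g (zip c ks)) = g (c!i, ks!i) + sum_list (map g (zip (del i c) (del i ks)))"
proof -
  have z: "zip (del i c) (del i ks) = del i (zip c ks)"
    using assms by (simp add: del_def zip_append take_zip drop_zip)
  have "zip c ks = take i (zip c ks) @ (zip c ks) ! i # drop (Suc i) (zip c ks)"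
    by (rule id_take_nth_drop) (simp add: assms)
  then have "sum_list (map g (zip c ks)) = sum_list (map g (take i (zip c ks))) + g ((zip c ks)!i)
       + sum_list (map g (drop (Suc i) (zip c ks)))"
    by (metis add.assoc list.simps(9) map_append sum_list.Cons sum_list_append)
  then show ?thesis using assms z by (simp add: del_def)
qed

lemma sols_finite:
  assumes "\<forall>x\<in>set c. x > 0"
  shows "finite (sols A c k)"
proof -
  have "sols A c k \<subseteq> {xs. set xs \<subseteq> {0..k} \<and> length xs = length c}"
  proof
    fix ks assume ks: "ks \<in> sols A c k"
    have "set ks \<subseteq> {0..k}"
    proof
      fix y assume "y \<in> set ks"
      then obtain i where i: "i < length ks" "y = ks ! i" by (auto simp: in_set_conv_nth)
      have li: "i < length c" using i ks by (simp add: sols_def)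
      have "c ! i * ks ! i \<le> (\<Sum>i<length c. c ! i * ks ! i)"
        by (rule member_le_sum) (use li in auto)
      moreover have "c ! i > 0" using assms li by auto
      moreover have "(\<Sum>i<length c. c ! i * ks ! i) = k" using ks by (simp add: sols_def)
      ultimately have "c ! i * ks ! i \<le> k" by simp
      moreover have "ks ! i \<le> c ! i * ks ! i" using \<open>c ! i > 0\<close> by simp
      ultimately have "ks ! i \<le> k" by linarith
      then show "y \<in> {0..k}" using i by simp
    qed
    then show "ks \<in> {xs. set xs \<subseteq> {0..k} \<and> length xs = length c}" using ks by (simp add: sols_def)
  qed
  then show ?thesis using finite_lists_length_eq[of "{0..k}" "length c"] finite_subset by blast
qed

lemma hatc_obtain:
  assumes "finite S"
  shows "\<exists>F. F \<subseteq> S \<and> finite F \<and> disjoint_family_sols F \<and> card F = hatc S"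
proof -
  let ?Fs = "{card F | F. F \<subseteq> S \<and> finite F \<and> disjoint_family_sols F}"
  have "?Fs \<subseteq> {0..card S}" using assms by (auto intro: card_mono)
  then have "finite ?Fs" using finite_subset by blast
  moreover have "?Fs \<noteq> {}"
    by (rule ccontr) (auto simp: disjoint_family_sols_def)
  ultimately have "Max ?Fs \<in> ?Fs" by (rule Max_in)
  then show ?thesis unfolding hatc_def by auto
qed

lemma hatc_ge:
  assumes "finite S" "F \<subseteq> S" "disjoint_family_sols F"
  shows "card F \<le> hatc S"
proof -
  let ?Fs = "{card F | F. F \<subseteq> S \<and> finite F \<and> disjoint_family_sols F}"
  have "?Fs \<subseteq> {0..card S}" using assms by (auto intro: card_mono)
  then have "finite ?Fs" using finite_subset by blast
  moreover have "card F \<in> ?Fs" using assms finite_subset by blast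
  ultimately show ?thesis unfolding hatc_def by (rule Max_ge)
qed

lemma cover:
  fixes S :: "nat list set"
  assumes fin: "finite S" and len: "\<forall>s\<in>S. length s = L" and L: "L \<ge> 1"
    and bnd: "\<forall>i<L. \<forall>x. card {s\<in>S. s!i = x} \<le> B"
  shows "card S \<le> L * L * hatc S * B"
proof -
  obtain F where F: "F \<subseteq> S" "finite F" "disjoint_family_sols F" "card F = hatc S"
    using hatc_obtain[OF fin] by blast
  define U where "U = \<Union>(set ` F)"
  have finU: "finite U" using F(2) by (simp add: U_def)
  have meet: "\<exists>i<L. s!i \<in> U" if s: "s \<in> S" for s
  proof (rule ccontr)
    assume nm: "\<not> (\<exists>i<L. s!i \<in> U)"
    have dis: "set s \<inter> U = {}"
    proof (rule ccontr)
      assume "set s \<inter> U \<noteq> {}"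
      then obtain y where "y \<in> set s" "y \<in> U" by blast
      then obtain i where "i < length s" "s ! i = y" by (auto simp: in_set_conv_nth)
      then have "i < L" "s ! i \<in> U" using len s \<open>y \<in> U\<close> by auto
      then show False using nm by blast
    qed
    have "length s = L" using len s by blast
    then have ne: "s \<noteq> []" using L by auto
    then have ne2: "s ! 0 \<in> set s" by simp
    have sF: "s \<notin> F"
    proof
      assume "s \<in> F" then have "set s \<subseteq> U" unfolding U_def by (rule Union_upper[OF imageI])
      then show False using dis ne2 by blast
    qed
    have dF: "set z \<inter> set s = {}" if "z \<in> F" for z using dis that by (auto simp: U_def)
    have "disjoint_family_sols (insert s F)"
      unfolding disjoint_family_sols_def
    proof (intro ballI impI)
      fix x y assume x: "x \<in> insert s F" and y: "y \<in> insert s F" and xy: "x \<noteq> y"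
      show "set x \<inter> set y = {}"
      proof (cases "x = s")
        case True then have "y \<in> F" using y xy by auto
        then show ?thesis using dF True by blast
      next
        case False then have xF: "x \<in> F" using x by auto
        show ?thesis
        proof (cases "y = s")
          case True then show ?thesis using dF[OF xF] by blast
        next
          case False then have "y \<in> F" using y by auto
          then show ?thesis using F(3) xF xy unfolding disjoint_family_sols_def by blast
        qed
      qed
    qed
    then have "card (insert s F) \<le> hatc S" using hatc_ge[OF fin] F s by auto
    then show False using sF F by simp
  qed
  have sub: "S \<subseteq> (\<Union>x\<in>U. \<Union>i\<in>{..<L}. {s\<in>S. s!i = x})" using meet by blast
  have "card S \<le> card (\<Union>x\<in>U. \<Union>i\<in>{..<L}. {s\<in>S. s!i = x})"
    by (rule card_mono[OF _ sub]) (use finU fin in auto)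
  also have "\<dots> \<le> (\<Sum>x\<in>U. card (\<Union>i\<in>{..<L}. {s\<in>S. s!i = x}))"
    by (rule card_UN_le[OF finU])
  also have "\<dots> \<le> (\<Sum>x\<in>U. \<Sum>i<L. card {s\<in>S. s!i = x})"
    by (rule sum_mono) (rule card_UN_le, simp)
  also have "\<dots> \<le> (\<Sum>x\<in>U. \<Sum>i<L. B)"
    by (rule sum_mono)+ (use bnd in auto)
  also have "\<dots> = card U * (L * B)" by simp
  also have "card U \<le> card F * L"
  proof -
    have "card U \<le> (\<Sum>s\<in>F. card (set s))" unfolding U_def
      by (rule card_UN_le[OF F(2)])
    also have "\<dots> \<le> (\<Sum>s\<in>F. L)"
      by (rule sum_mono) (use len F(1) card_length in fastforce)
    finally show ?thesis by simp
  qed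
  then have "card U * (L * B) \<le> card F * L * (L * B)" by (rule mult_le_mono1)
  finally show ?thesis using F(4) by (simp add: algebra_simps)
qed

lemma one_var:
  assumes "c > 0"
  shows "card (sols A [c] k) \<le> 1"
proof -
  have "sols A [c] k \<subseteq> {[k div c]}"
  proof
    fix ks assume "ks \<in> sols A [c] k"
    then have "length ks = 1" "c * ks ! 0 = k" by (auto simp: sols_def)
    then obtain y where "ks = [y]" "c * y = k"
      by (metis One_nat_def length_0_conv length_Suc_conv nth_Cons_0)
    then show "ks \<in> {[k div c]}" using assms by auto
  qed
  then have "card (sols A [c] k) \<le> card {[k div c]}" by (rule card_mono[rotated]) simp
  then show ?thesis by simp
qed

lemma fiber:
  assumes S: "S \<subseteq> sols A c k" and i: "i < length c" and pos: "\<forall>y\<in>set c. y > 0"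
  shows "card {s\<in>S. s!i = x} \<le> card (sols A (del i c) (k - c!i*x))"
proof (rule card_inj_on_le[where f = "del i"])
  show "finite (sols A (del i c) (k - c!i*x))"
    by (rule sols_finite) (use pos set_del[of i c] in blast)
  show "inj_on (del i) {s\<in>S. s!i = x}"
  proof
    fix s t assume s: "s \<in> {s\<in>S. s!i = x}" and t: "t \<in> {s\<in>S. s!i = x}" and e: "del i s = del i t"
    have "length s = length c" "length t = length c" using s t S by (auto simp: sols_def)
    then show "s = t" using del_inj[of i s t] s t e i by auto
  qed
  show "del i ` {s\<in>S. s!i = x} \<subseteq> sols A (del i c) (k - c!i*x)"
  proof
    fix u assume "u \<in> del i ` {s\<in>S. s!i = x}"
    then obtain s where s: "s \<in> S" "s!i = x" "u = del i s" by auto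
    have sl: "length s = length c" "set s \<subseteq> A" "(\<Sum>j<length c. c ! j * s ! j) = k"
      using s S by (auto simp: sols_def)
    have "k = c!i*x + sum_list (map (\<lambda>(a,b). a*b) (zip (del i c) (del i s)))"
      using split_sum[OF i sl(1), of "\<lambda>(a,b). a*b"] sum_eq_list[OF sl(1)] sl(3) s(2) by simp
    moreover have "length (del i s) = length (del i c)" using sl i by (simp add: length_del)
    ultimately have "(\<Sum>j<length (del i c). del i c ! j * del i s ! j) = k - c!i*x"
      using sum_eq_list[of "del i s" "del i c"] by simp
    moreover have "set (del i s) \<subseteq> A" using sl set_del[of i s] by blast
    ultimately show "u \<in> sols A (del i c) (k - c!i*x)"
      using s \<open>length (del i s) = length (del i c)\<close> by (simp add: sols_def)
  qed
qed

lemma ic_del: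
  assumes "ix \<in> index_choices h j" "i < j"
  shows "del i ix \<in> index_choices h (j - 1)"
proof -
  have ix: "sorted_wrt (<) ix" "length ix = j" "set ix \<subseteq> {1..h}"
    using assms by (auto simp: index_choices_def)
  have "sorted_wrt (<) (take i ix @ drop i ix)" using ix by simp
  then have a: "sorted_wrt (<) (take i ix)" "sorted_wrt (<) (drop i ix)"
     "\<forall>x\<in>set (take i ix). \<forall>y\<in>set (drop i ix). x < y"
    using sorted_wrt_append[of "(<)" "take i ix" "drop i ix"] by auto
  have "set (drop (Suc i) ix) \<subseteq> set (drop i ix)" by (rule set_drop_subset_set_drop) simp
  moreover have "sorted_wrt (<) (drop (Suc i) ix)" using ix(1) by (rule sorted_wrt_drop)
  ultimately have "sorted_wrt (<) (del i ix)" using a by (auto simp: del_def sorted_wrt_append)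
  moreover have "length (del i ix) = j - 1" using ix assms by (simp add: length_del)
  moreover have "set (del i ix) \<subseteq> {1..h}" using ix set_del[of i ix] by blast
  ultimately show ?thesis by (simp add: index_choices_def)
qed

lemma ic_finite: "finite (index_choices h j)"
proof -
  have "index_choices h j \<subseteq> {xs. set xs \<subseteq> {1..h} \<and> length xs = j}"
    by (auto simp: index_choices_def)
  then show ?thesis using finite_lists_length_eq[of "{1..h}" j] finite_subset by blast
qed

lemma ic_upt: "l \<le> h \<Longrightarrow> [1..<l+1] \<in> index_choices h l"
  unfolding index_choices_def using sorted_wrt_upt[of 1 "l+1"] by (auto simp del: upt_Suc)


theorem mainTheorem9:
  fixes h :: nat and b :: "nat \<Rightarrow> nat"
  assumes "h \<ge> 2"
    and "\<forall>i\<in>{1..h}. b i > 0"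
    and "Gcd (b ` {1..h}) = 1"
  shows "\<exists>C::real. \<forall>(A::nat set) (\<delta>::real) (l::nat) (n::nat).
           0 < \<delta> \<longrightarrow> \<delta> < 1 \<longrightarrow> 2 \<le> l \<longrightarrow> l \<le> h \<longrightarrow>
             real (r_fn b A l n) \<le> C * real (hat_r_fn b A l n) * prod_factor h b A l n
           \<and> real (r_star_fn h b A l n) \<le> C * real (hat_r_star_fn h b A l n) * prod_factor h b A l n
           \<and> real (rho_fn b A l n) \<le> C * real (hat_rho_fn b A l n) * prod_factor h b A l n
           \<and> real (rho_small_fn b \<delta> A l n) \<le> C * real (hat_rho_small_fn b \<delta> A l n) * prod_factor h b A l n"
proof -
  let ?C = "real ((h^2)^h)"
  show ?thesis
  proof (rule exI[of _ ?C], intro allI impI)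
    fix A :: "nat set" and \<delta> :: real and l n :: nat
    assume "0 < \<delta>" "\<delta> < 1" and l2: "2 \<le> l" and lh: "l \<le> h"
    define H where "H i = Max ((\<lambda>k. hat_r_star_fn h b A i k) ` {0..n})" for i
    define P where "P j = (\<Prod>i\<in>{2..j}. H i)" for j
    have pos: "\<forall>y\<in>set (map b ix). y > 0" if "ix \<in> index_choices h j" for ix j
      using that assms(2) by (auto simp: index_choices_def)
    have hatH: "hatc (sols A (map b ix) k) \<le> H j" if "ix \<in> index_choices h j" "k \<le> n" for ix j k
    proof -
      have "hatc (sols A (map b ix) k) \<le> hat_r_star_fn h b A j k"
        unfolding hat_r_star_fn_def by (rule Max_ge) (use that ic_finite in auto)
      also have "\<dots> \<le> H j" unfolding H_def by (rule Max_ge) (use that in auto)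
      finally show ?thesis .
    qed
    have claim: "\<forall>ix\<in>index_choices h j. \<forall>k\<le>n. card (sols A (map b ix) k) \<le> (h^2)^j * P j"
      if "1 \<le> j" "j \<le> h" for j
      using that
    proof (induction j)
      case 0 then show ?case by simp
    next
      case (Suc j')
      show ?case
      proof (cases "j' = 0")
        case True
        show ?thesis
        proof (intro ballI allI impI)
          fix ix k assume ix: "ix \<in> index_choices h (Suc j')" "k \<le> n"
          then obtain a where a: "ix = [a]" using True by (auto simp: index_choices_def length_Suc_conv)
          then have "card (sols A (map b ix) k) \<le> 1" using one_var pos[OF ix(1)] by auto
          moreover have "1 \<le> (h^2)^(Suc j') * P (Suc j')" using True assms(1) by (simp add: P_def)
          ultimately show "card (sols A (map b ix) k) \<le> (h^2)^(Suc j') * P (Suc j')" using le_trans by blast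
        qed
      next
        case False
        then have IH: "\<forall>ix\<in>index_choices h j'. \<forall>k\<le>n. card (sols A (map b ix) k) \<le> (h^2)^j' * P j'"
          using Suc by auto
        show ?thesis
        proof (intro ballI allI impI)
          fix ix k assume ix: "ix \<in> index_choices h (Suc j')" and k: "k \<le> n"
          let ?S = "sols A (map b ix) k"
          have lix: "length ix = Suc j'" using ix by (simp add: index_choices_def)
          have "card ?S \<le> Suc j' * Suc j' * hatc ?S * ((h^2)^j' * P j')"
          proof (rule cover)
            show "finite ?S" by (rule sols_finite[OF pos[OF ix]])
            show "\<forall>s\<in>?S. length s = Suc j'" using lix by (simp add: sols_def)
            show "Suc j' \<ge> 1" by simp
            show "\<forall>i<Suc j'. \<forall>x. card {s\<in>?S. s!i = x} \<le> (h^2)^j' * P j'"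
            proof (intro allI impI)
              fix i x assume i: "i < Suc j'"
              have "card {s\<in>?S. s!i = x} \<le> card (sols A (del i (map b ix)) (k - (map b ix)!i*x))"
                by (rule fiber) (use i lix pos[OF ix] in auto)
              also have "\<dots> = card (sols A (map b (del i ix)) (k - (map b ix)!i*x))" by (simp add: map_del)
              also have "\<dots> \<le> (h^2)^j' * P j'"
                using IH ic_del[OF ix i] k by auto
              finally show "card {s\<in>?S. s!i = x} \<le> (h^2)^j' * P j'" .
            qed
          qed
          also have "\<dots> \<le> h^2 * H (Suc j') * ((h^2)^j' * P j')"
          proof -
            have "Suc j' * Suc j' \<le> h^2" using mult_le_mono[OF Suc.prems(2) Suc.prems(2)] by (simp add: power2_eq_square)
            moreover have "hatc ?S \<le> H (Suc j')" by (rule hatH[OF ix k])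
            ultimately show ?thesis by (intro mult_le_mono1 mult_le_mono) auto
          qed
          also have "\<dots> = (h^2)^(Suc j') * P (Suc j')"
          proof -
            have "{2..Suc j'} = insert (Suc j') {2..j'}" using False by auto
            then have "P (Suc j') = H (Suc j') * P j'" by (simp add: P_def)
            then show ?thesis by (simp add: algebra_simps)
          qed
          finally show "card ?S \<le> (h^2)^(Suc j') * P (Suc j')" .
        qed
      qed
    qed
    have fin: "card S \<le> (h^2)^h * hatc S * P (l-1)"
      if ix: "ix \<in> index_choices h l" and S: "S \<subseteq> sols A (map b ix) n" for ix S
    proof -
      have fS: "finite S" using sols_finite[OF pos[OF ix]] S finite_subset by blast
      have lix: "length ix = l" using ix by (simp add: index_choices_def)
      have "card S \<le> l * l * hatc S * ((h^2)^(l-1) * P (l-1))"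
      proof (rule cover[OF fS])
        show "\<forall>s\<in>S. length s = l" using S lix by (auto simp: sols_def)
        show "l \<ge> 1" using l2 by simp
        show "\<forall>i<l. \<forall>x. card {s\<in>S. s!i = x} \<le> (h^2)^(l-1) * P (l-1)"
        proof (intro allI impI)
          fix i x assume i: "i < l"
          have "card {s\<in>S. s!i = x} \<le> card {s\<in>sols A (map b ix) n. s!i = x}"
            by (rule card_mono) (use S sols_finite[OF pos[OF ix]] in auto)
          also have "\<dots> \<le> card (sols A (del i (map b ix)) (n - (map b ix)!i*x))"
            by (rule fiber) (use i lix pos[OF ix] in auto)
          also have "\<dots> = card (sols A (map b (del i ix)) (n - (map b ix)!i*x))" by (simp add: map_del)
          also have "\<dots> \<le> (h^2)^(l-1) * P (l-1)"
            using claim[of "l-1"] l2 lh ic_del[OF ix i] by auto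
          finally show "card {s\<in>S. s!i = x} \<le> (h^2)^(l-1) * P (l-1)" .
        qed
      qed
      also have "\<dots> = (l * l * (h^2)^(l-1)) * hatc S * P (l-1)" by (simp add: algebra_simps)
      also have "\<dots> \<le> (h^2)^h * hatc S * P (l-1)"
      proof -
        obtain m where m: "l = Suc m" using l2 by (cases l) auto
        have "l * l \<le> h^2" using mult_le_mono[OF lh lh] by (simp add: power2_eq_square)
        then have "l * l * (h^2)^(l-1) \<le> h^2 * (h^2)^m" using m mult_le_mono1[OF \<open>l * l \<le> h^2\<close>, of "(h^2)^m"] by simp
        also have "\<dots> = (h^2)^l" using m by simp
        also have "\<dots> \<le> (h^2)^h" by (rule power_increasing[OF lh]) (use assms(1) in simp)
        finally show ?thesis by (intro mult_le_mono1)
      qed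
      finally show ?thesis .
    qed
    have pf: "prod_factor h b A l n = real (P (l-1))"
    proof -
      have "{2..<l} = {2..l-1}" using l2 by auto
      then show ?thesis by (simp add: prod_factor_def P_def H_def)
    qed
    have R: "real (card S) \<le> ?C * real (hatc S) * prod_factor h b A l n"
      if ix: "ix \<in> index_choices h l" and S: "S \<subseteq> sols A (map b ix) n" for ix S
    proof -
      have "real (card S) \<le> real ((h^2)^h * hatc S * P (l-1))"
        using fin[OF ix S] by (simp only: of_nat_le_iff)
      then show ?thesis unfolding pf by (simp only: of_nat_mult)
    qed
    have ix0: "[1..<l+1] \<in> index_choices h l" by (rule ic_upt[OF lh])
    have bv: "bvec b l = map b [1..<l+1]" by (simp add: bvec_def)
    have p1: "real (r_fn b A l n) \<le> ?C * real (hat_r_fn b A l n) * prod_factor h b A l n"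
      unfolding r_fn_def hat_r_fn_def r_sols_def bv by (rule R[OF ix0]) simp
    have p3: "real (rho_fn b A l n) \<le> ?C * real (hat_rho_fn b A l n) * prod_factor h b A l n"
      unfolding rho_fn_def hat_rho_fn_def by (rule R[OF ix0]) (auto simp: rho_sols_def bv)
    have p4: "real (rho_small_fn b \<delta> A l n) \<le> ?C * real (hat_rho_small_fn b \<delta> A l n) * prod_factor h b A l n"
      unfolding rho_small_fn_def hat_rho_small_fn_def by (rule R[OF ix0]) (auto simp: rho_small_sols_def bv)
    have p2: "real (r_star_fn h b A l n) \<le> ?C * real (hat_r_star_fn h b A l n) * prod_factor h b A l n"
    proof -
      let ?I = "(\<lambda>ix. card (sols A (map b ix) n)) ` index_choices h l"
      have "Max ?I \<in> ?I" by (rule Max_in) (use ic_finite ix0 in auto)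
      then obtain ix where ix: "ix \<in> index_choices h l" and e: "r_star_fn h b A l n = card (sols A (map b ix) n)"
        unfolding r_star_fn_def by auto
      have "real (r_star_fn h b A l n) \<le> ?C * real (hatc (sols A (map b ix) n)) * prod_factor h b A l n"
        unfolding e by (rule R[OF ix]) simp
      also have "\<dots> \<le> ?C * real (hat_r_star_fn h b A l n) * prod_factor h b A l n"
      proof -
        have "hatc (sols A (map b ix) n) \<le> hat_r_star_fn h b A l n"
          unfolding hat_r_star_fn_def by (rule Max_ge) (use ix ic_finite in auto)
        then show ?thesis unfolding pf by (intro mult_right_mono mult_left_mono) auto
      qed
      finally show ?thesis .
    qed
    show "real (r_fn b A l n) \<le> ?C * real (hat_r_fn b A l n) * prod_factor h b A l n
           \<and> real (r_star_fn h b A l n) \<le> ?C * real (hat_r_star_fn h b A l n) * prod_factor h b A l n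
           \<and> real (rho_fn b A l n) \<le> ?C * real (hat_rho_fn b A l n) * prod_factor h b A l n
           \<and> real (rho_small_fn b \<delta> A l n) \<le> ?C * real (hat_rho_small_fn b \<delta> A l n) * prod_factor h b A l n"
      using p1 p2 p3 p4 by blast
  qed
qed

end
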